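(* Let $(Z_k)_{k\ge1}$ be independent symmetrical real-valued random variables with unit variance, let $(a_{n,k})_{1\le k\le n<\infty}$ be real numbers, set $X_n=\sum_{k=1}^n a_{n,k}Z_k$, and let $(u_n)$ be vectors in a Hilbert space $\mathbb{H}$. Suppose there exist constants $C>0$ and $\alpha\le 1$ such that $|a_{n,k}|\le C(n-k+1)^{-\alpha}$ for all $1\le k\le n$, and that $\|u_n\|^2\le C' n^{-(1+2\beta)}$ for all $n\ge1$, for some constants $C'>0$ and $\beta>1-\alpha$. Then $\sum_{n=1}^\infty X_nu_n$ converges almost surely in $\mathbb{H}$, and so does $\sum_{n=1}^\infty \epsilon_nX_nu_n$ for every non-random choice of signs $(\epsilon_n)\in\{-1,1\}^{\mathbb{N}}$.
   Context: A real random variable $Z$ is symmetrical if $Z$ and $-Z$ have the same distribution; unit variance means $\mathbb{E}(Z^2)=1$. *)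

theory Defs
  imports "HOL-Probability.Probability"
begin

end

theory Submission
  imports Defs
begin



context prob_space
begin

lemma mean_zero:
  fixes Z :: "'a \<Rightarrow> real"
  assumes [measurable]: "Z \<in> borel_measurable M"
    and "integrable M (\<lambda>x. (Z x)\<^sup>2)"
    and s: "distr M borel Z = distr M borel (\<lambda>x. - Z x)"
  shows "integrable M Z" "expectation Z = 0"
proof -
  show iZ: "integrable M Z"
    by (rule square_integrable_imp_integrable) (use assms in auto)
  have "expectation Z = integral\<^sup>L (distr M borel Z) (\<lambda>x. x)"
    by (simp add: integral_distr)
  also have "\<dots> = integral\<^sup>L (distr M borel (\<lambda>x. - Z x)) (\<lambda>x. x)"
    using s by simp
  also have "\<dots> = expectation (\<lambda>x. - Z x)"
    by (simp add: integral_distr)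
  also have "\<dots> = - expectation Z" by simp
  finally show "expectation Z = 0" by simp
qed

lemma cross_zero:
  fixes Z :: "nat \<Rightarrow> 'a \<Rightarrow> real"
  assumes meas: "\<And>k. k \<ge> 1 \<Longrightarrow> Z k \<in> borel_measurable M"
    and indep: "indep_vars (\<lambda>_. borel) Z {1..}"
    and symm: "\<And>k. k \<ge> 1 \<Longrightarrow> distr M borel (Z k) = distr M borel (\<lambda>x. - Z k x)"
    and var_int: "\<And>k. k \<ge> 1 \<Longrightarrow> integrable M (\<lambda>x. (Z k x)\<^sup>2)"
    and var: "\<And>k. k \<ge> 1 \<Longrightarrow> expectation (\<lambda>x. (Z k x)\<^sup>2) = 1"
    and jk: "j \<ge> 1" "k \<ge> 1"
  shows "integrable M (\<lambda>x. Z j x * Z k x)"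
    "expectation (\<lambda>x. Z j x * Z k x) = (if j = k then 1 else 0)"
proof -
  have iZ: "\<And>k. k \<ge> 1 \<Longrightarrow> integrable M (Z k)" "\<And>k. k\<ge>1 \<Longrightarrow> expectation (Z k) = 0"
    using mean_zero[OF meas var_int symm] by auto
  have "integrable M (\<lambda>x. Z j x * Z k x) \<and> expectation (\<lambda>x. Z j x * Z k x) = (if j = k then 1 else 0)"
  proof (cases "j = k")
    case True
    then show ?thesis using var_int[OF jk(1)] var[OF jk(1)] by (simp add: power2_eq_square)
  next
    case False
    have ind: "indep_vars (\<lambda>_. borel) Z {j, k}"
      by (rule indep_vars_subset[OF indep]) (use jk in auto)
    have "integrable M (\<lambda>x. \<Prod>i\<in>{j,k}. Z i x)"
      by (rule indep_vars_integrable[OF _ ind]) (use jk iZ in auto)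
    moreover have "expectation (\<lambda>x. \<Prod>i\<in>{j,k}. Z i x) = (\<Prod>i\<in>{j,k}. expectation (Z i))"
      by (rule indep_vars_lebesgue_integral[OF _ ind]) (use jk iZ in auto)
    ultimately show ?thesis using False iZ jk by simp
  qed
  then show "integrable M (\<lambda>x. Z j x * Z k x)"
    "expectation (\<lambda>x. Z j x * Z k x) = (if j = k then 1 else 0)" by auto
qed

end




context prob_space
begin

context
  fixes Z :: "nat \<Rightarrow> 'a \<Rightarrow> real"
  assumes meas: "\<And>k. k \<ge> 1 \<Longrightarrow> Z k \<in> borel_measurable M"
    and indep: "indep_vars (\<lambda>_. borel) Z {1..}"
    and symm: "\<And>k. k \<ge> 1 \<Longrightarrow> distr M borel (Z k) = distr M borel (\<lambda>x. - Z k x)"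
    and var_int: "\<And>k. k \<ge> 1 \<Longrightarrow> integrable M (\<lambda>x. (Z k x)\<^sup>2)"
    and var: "\<And>k. k \<ge> 1 \<Longrightarrow> expectation (\<lambda>x. (Z k x)\<^sup>2) = 1"
begin

lemma norm_sq_expand:
  fixes v :: "nat \<Rightarrow> 'h::real_inner"
  shows "(norm (\<Sum>k\<in>K. c k *\<^sub>R v k))\<^sup>2 = (\<Sum>j\<in>K. \<Sum>k\<in>K. (c j * c k) * inner (v j) (v k))"
  by (simp add: power2_norm_eq_inner inner_sum_left inner_sum_right sum_distrib_left mult.assoc inner_commute)
    (subst sum.swap, simp add: inner_commute)

lemma sq_sum_integral:
  fixes v :: "nat \<Rightarrow> 'h::real_inner"
  assumes K: "finite K" "K \<subseteq> {1..}"
  shows "integrable M (\<lambda>x. (norm (\<Sum>k\<in>K. Z k x *\<^sub>R v k))\<^sup>2)"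
    "expectation (\<lambda>x. (norm (\<Sum>k\<in>K. Z k x *\<^sub>R v k))\<^sup>2) = (\<Sum>k\<in>K. (norm (v k))\<^sup>2)"
proof -
  have jk: "\<And>j k. j \<in> K \<Longrightarrow> k \<in> K \<Longrightarrow> integrable M (\<lambda>x. Z j x * Z k x) \<and>
      expectation (\<lambda>x. Z j x * Z k x) = (if j = k then 1 else 0)"
  proof -
    fix j k assume "j \<in> K" "k \<in> K"
    then have "j \<ge> 1" "k \<ge> 1" using K by auto
    then show "?thesis j k" using cross_zero[OF meas indep symm var_int var] by blast
  qed
  have eq: "(\<lambda>x. (norm (\<Sum>k\<in>K. Z k x *\<^sub>R v k))\<^sup>2) =
      (\<lambda>x. \<Sum>j\<in>K. \<Sum>k\<in>K. (Z j x * Z k x) * inner (v j) (v k))"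
    by (simp add: norm_sq_expand)
  show "integrable M (\<lambda>x. (norm (\<Sum>k\<in>K. Z k x *\<^sub>R v k))\<^sup>2)"
    unfolding eq
  proof (intro Bochner_Integration.integrable_sum)
    fix j k assume "j \<in> K" "k \<in> K"
    then have "integrable M (\<lambda>x. Z j x * Z k x)" using jk by blast
    then show "integrable M (\<lambda>x. Z j x * Z k x * inner (v j) (v k))" by simp
  qed
  have "expectation (\<lambda>x. \<Sum>j\<in>K. \<Sum>k\<in>K. (Z j x * Z k x) * inner (v j) (v k))
      = (\<Sum>j\<in>K. \<Sum>k\<in>K. expectation (\<lambda>x. Z j x * Z k x) * inner (v j) (v k))"
    using jk by (simp add: integral_sum integrable_sum integrable_mult_left)
  also have "\<dots> = (\<Sum>j\<in>K. \<Sum>k\<in>K. (if j = k then inner (v j) (v k) else 0))"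
    using jk by (intro sum.cong refl) auto
  also have "\<dots> = (\<Sum>k\<in>K. (norm (v k))\<^sup>2)"
    using K(1) by (simp add: power2_norm_eq_inner)
  finally show "expectation (\<lambda>x. (norm (\<Sum>k\<in>K. Z k x *\<^sub>R v k))\<^sup>2) = (\<Sum>k\<in>K. (norm (v k))\<^sup>2)"
    unfolding eq .
qed

end
end




lemma sq_split_ineq:
  fixes a b t :: real
  assumes "0 \<le> a" "0 \<le> b" "t > 0"
  shows "(a + b)\<^sup>2 \<le> (1 + t) * a\<^sup>2 + (1 + 1 / t) * b\<^sup>2"
proof -
  have "0 \<le> (t * a - b)\<^sup>2 / t" using assms by simp
  also have "(t * a - b)\<^sup>2 / t = t * a\<^sup>2 - 2 * a * b + b\<^sup>2 / t"
    using assms by (simp add: field_simps power2_eq_square)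
  finally have "2 * a * b \<le> t * a\<^sup>2 + b\<^sup>2 / t" by simp
  then show ?thesis by (simp add: power2_sum algebra_simps)
qed

lemma moricz:
  fixes S :: "nat \<Rightarrow> nat \<Rightarrow> 'a \<Rightarrow> 'h::real_normed_vector" and F :: "nat \<Rightarrow> nat \<Rightarrow> real"
  assumes add: "\<And>m l n x. m \<le> l \<Longrightarrow> l \<le> n \<Longrightarrow> S m l x + S l n x = S m n x"
    and int: "\<And>m n. m \<le> n \<Longrightarrow> integrable M (\<lambda>x. (norm (S m n x))\<^sup>2)"
    and bnd: "\<And>m n. m \<le> n \<Longrightarrow> integral\<^sup>L M (\<lambda>x. (norm (S m n x))\<^sup>2) \<le> F m n"
    and sup: "\<And>m l n. m \<le> l \<Longrightarrow> l \<le> n \<Longrightarrow> F m l + F l n \<le> F m n"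
    and nonneg: "\<And>m n. m \<le> n \<Longrightarrow> 0 \<le> F m n"
  shows "integrable M (\<lambda>x. Max ((\<lambda>j. (norm (S m (m+j) x))\<^sup>2) ` {..2^r})) \<and>
     integral\<^sup>L M (\<lambda>x. Max ((\<lambda>j. (norm (S m (m+j) x))\<^sup>2) ` {..2^r})) \<le> (real r + 1)\<^sup>2 * F m (m + 2^r)"
proof (induction r arbitrary: m)
  define Mx where "Mx r m x = Max ((\<lambda>j. (norm (S m (m+j) x))\<^sup>2) ` {..2^r})" for r m x
  have S0: "S m m x = 0" for m x using add[of m m m x] by simp
  have Mx_int: "integrable M (Mx r m)" for r m
  proof (rule Bochner_Integration.integrable_bound[where f="\<lambda>x. \<Sum>j\<in>{..2^r}. (norm (S m (m+j) x))\<^sup>2"])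
    show "integrable M (\<lambda>x. \<Sum>j\<in>{..2^r}. (norm (S m (m+j) x))\<^sup>2)"
      using int by (intro Bochner_Integration.integrable_sum) auto
    show "Mx r m \<in> borel_measurable M"
      unfolding Mx_def using int by (intro borel_measurable_Max) (auto intro: borel_measurable_integrable)
    show "AE x in M. norm (Mx r m x) \<le> norm (\<Sum>j\<in>{..2^r}. (norm (S m (m+j) x))\<^sup>2)"
    proof (intro AE_I2)
      fix x
      have "Mx r m x \<in> (\<lambda>j. (norm (S m (m+j) x))\<^sup>2) ` {..2^r}"
        unfolding Mx_def by (intro Max_in) auto
      then obtain j where j: "j \<le> 2^r" "Mx r m x = (norm (S m (m+j) x))\<^sup>2" by auto
      have "(norm (S m (m+j) x))\<^sup>2 \<le> (\<Sum>j\<in>{..2^r}. (norm (S m (m+j) x))\<^sup>2)"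
        using j by (intro member_le_sum) auto
      then show "norm (Mx r m x) \<le> norm (\<Sum>j\<in>{..2^r}. (norm (S m (m+j) x))\<^sup>2)"
        using j by (simp add: sum_nonneg)
    qed
  qed
  {
    case 0
    have "(\<lambda>j. (norm (S m (m+j) x))\<^sup>2) ` {..2^0} = {0, (norm (S m (m+1) x))\<^sup>2}" for x
      by (auto simp: S0 atMost_Suc image_insert)
    then have eq: "Mx 0 m = (\<lambda>x. (norm (S m (m+1) x))\<^sup>2)"
      unfolding Mx_def by (auto simp: fun_eq_iff)
    show ?case using int[of m "m+1"] bnd[of m "m+1"] eq unfolding Mx_def by simp
  next
    case (Suc r)
    define mid where "mid = m + 2^r"
    define t where "t = real r + 1"
    have tpos: "t > 0" unfolding t_def by simp
    have pw: "(\<lambda>x. Mx (Suc r) m x) = Mx (Suc r) m" by simp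
    have pt: "Mx (Suc r) m x \<le> (1 + t) * (norm (S m mid x))\<^sup>2 + (1 + 1/t) * (Mx r m x + Mx r mid x)" for x
    proof -
      have Mnn: "0 \<le> Mx r m' x" for m'
      proof -
        have "(norm (S m' (m'+0) x))\<^sup>2 \<le> Mx r m' x" unfolding Mx_def
          by (intro Max_ge) (auto intro!: rev_image_eqI[where x=0])
        then show ?thesis by (smt (verit) zero_le_power2)
      qed
      show ?thesis unfolding Mx_def[of "Suc r"]
      proof (subst Max_le_iff, simp, simp, clarsimp)
        fix j :: nat assume j: "j \<le> 2 * 2^r"
        show "(norm (S m (m+j) x))\<^sup>2 \<le> (1 + t) * (norm (S m mid x))\<^sup>2 + (1 + 1/t) * (Mx r m x + Mx r mid x)"
        proof (cases "j \<le> 2^r")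
          case True
          have "(norm (S m (m+j) x))\<^sup>2 \<le> Mx r m x" unfolding Mx_def using True by (intro Max_ge) auto
          also have "\<dots> \<le> (1 + 1/t) * (Mx r m x + Mx r mid x)"
            using Mnn[of m] Mnn[of mid] tpos by (simp add: algebra_simps)
          also have "\<dots> \<le> (1 + t) * (norm (S m mid x))\<^sup>2 + (1 + 1/t) * (Mx r m x + Mx r mid x)"
            using tpos by simp
          finally show ?thesis .
        next
          case False
          define j' where "j' = j - 2^r"
          have jj: "m + j = mid + j'" "j' \<le> 2^r" using False j unfolding j'_def mid_def by auto
          have "S m (m+j) x = S m mid x + S mid (mid + j') x"
            using add[of m mid "mid+j'" x] jj unfolding mid_def by (simp add: add.assoc)
          then have "norm (S m (m+j) x) \<le> norm (S m mid x) + norm (S mid (mid+j') x)"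
            by (simp add: norm_triangle_ineq)
          then have "(norm (S m (m+j) x))\<^sup>2 \<le> (norm (S m mid x) + norm (S mid (mid+j') x))\<^sup>2"
            by (simp add: power_mono)
          also have "\<dots> \<le> (1 + t) * (norm (S m mid x))\<^sup>2 + (1 + 1/t) * (norm (S mid (mid+j') x))\<^sup>2"
            by (rule sq_split_ineq) (use tpos in auto)
          also have "(norm (S mid (mid+j') x))\<^sup>2 \<le> Mx r mid x"
            unfolding Mx_def using jj by (intro Max_ge) auto
          then have "(1 + 1/t) * (norm (S mid (mid+j') x))\<^sup>2 \<le> (1 + 1/t) * (Mx r m x + Mx r mid x)"
            using Mnn[of m] tpos by (intro mult_left_mono) auto
          finally show ?thesis by simp
        qed
      qed
    qed
    have "integral\<^sup>L M (Mx (Suc r) m) \<le> integral\<^sup>L M (\<lambda>x. (1 + t) * (norm (S m mid x))\<^sup>2 + (1 + 1/t) * (Mx r m x + Mx r mid x))"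
      using pt Mx_int int[of m mid] unfolding mid_def by (intro integral_mono) auto
    also have "\<dots> = (1 + t) * integral\<^sup>L M (\<lambda>x. (norm (S m mid x))\<^sup>2) + (1 + 1/t) * (integral\<^sup>L M (Mx r m) + integral\<^sup>L M (Mx r mid))"
      using Mx_int int[of m mid] unfolding mid_def by simp
    also have "\<dots> \<le> (1 + t) * F m mid + (1 + 1/t) * (t\<^sup>2 * F m mid + t\<^sup>2 * F mid (mid + 2^r))"
    proof -
      have "integral\<^sup>L M (\<lambda>x. (norm (S m mid x))\<^sup>2) \<le> F m mid" using bnd unfolding mid_def by simp
      moreover have "integral\<^sup>L M (Mx r m) \<le> t\<^sup>2 * F m mid"
        using Suc.IH[of m] unfolding Mx_def t_def mid_def by simp
      moreover have "integral\<^sup>L M (Mx r mid) \<le> t\<^sup>2 * F mid (mid + 2^r)"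
        using Suc.IH[of mid] unfolding Mx_def t_def mid_def by simp
      ultimately show ?thesis using tpos
        by (intro add_mono mult_left_mono) auto
    qed
    also have "\<dots> = (1 + t) * F m mid + (t + 1) * t * (F m mid + F mid (mid + 2^r))"
      using tpos by (simp add: field_simps power2_eq_square)
    also have "\<dots> \<le> (1 + t) * F m (m + 2^Suc r) + (t + 1) * t * F m (m + 2^Suc r)"
    proof -
      have s1: "F m mid + F mid (mid + 2^r) \<le> F m (m + 2^Suc r)"
        using sup[of m mid "mid + 2^r"] unfolding mid_def by (simp add: algebra_simps mult_2)
      have "F m mid \<le> F m (m + 2^Suc r)"
        using sup[of m mid "mid + 2^r"] nonneg[of mid "mid + 2^r"] unfolding mid_def by (simp add: algebra_simps mult_2)
      then show ?thesis using s1 tpos by (intro add_mono mult_left_mono) auto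
    qed
    also have "\<dots> = (real (Suc r) + 1)\<^sup>2 * F m (m + 2^Suc r)"
      unfolding t_def by (simp add: power2_eq_square algebra_simps)
    finally show ?case using Mx_int[of "Suc r" m] unfolding Mx_def by simp
  }
qed





lemma powr_step:
  fixes p :: real and N :: nat
  assumes p: "0 < p" "p < 1" and N: "N \<ge> 1"
  shows "p * real (N+1) powr (p - 1) \<le> real (N+1) powr p - real N powr p"
proof -
  have "\<exists>z. real N < z \<and> z < real (N+1) \<and>
      real (N+1) powr p - real N powr p = (real (N+1) - real N) * (p * z powr (p - 1))"
    by (rule MVT2) (use N in \<open>auto intro!: has_real_derivative_powr\<close>)
  then obtain z where z: "real N < z" "z < real (N+1)"
    "real (N+1) powr p - real N powr p = p * z powr (p - 1)" by auto
  have "real (N+1) powr (p - 1) \<le> z powr (p - 1)"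
    by (rule powr_mono2') (use z p N in auto)
  then show ?thesis using z p by simp
qed

lemma powsum_pos:
  fixes g :: real
  assumes g: "0 < g" "g < 1"
  shows "(\<Sum>j\<in>{1..N}. real j powr (-g)) \<le> real N powr (1 - g) / (1 - g)"
proof (induction N)
  case 0 then show ?case by simp
next
  case (Suc N)
  have "(\<Sum>j\<in>{1..Suc N}. real j powr (-g)) = (\<Sum>j\<in>{1..N}. real j powr (-g)) + real (N+1) powr (-g)"
    by simp
  also have "\<dots> \<le> real N powr (1 - g) / (1 - g) + real (N+1) powr (-g)"
    using Suc by simp
  also have "\<dots> \<le> real (Suc N) powr (1 - g) / (1 - g)"
  proof (cases "N = 0")
    case True
    then show ?thesis using g by (simp add: field_simps)
  next
    case False
    have "(1 - g) * real (N+1) powr ((1 - g) - 1) \<le> real (N+1) powr (1 - g) - real N powr (1 - g)"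
      by (rule powr_step) (use g False in auto)
    then have "real N powr (1 - g) + (1 - g) * real (N+1) powr (-g) \<le> real (N+1) powr (1 - g)"
      by simp
    then have "(real N powr (1 - g) + (1 - g) * real (N+1) powr (-g)) / (1 - g) \<le> real (N+1) powr (1 - g) / (1 - g)"
      using g by (intro divide_right_mono) auto
    moreover have "(real N powr (1 - g) + (1 - g) * real (N+1) powr (-g)) / (1 - g)
        = real N powr (1 - g) / (1 - g) + real (N+1) powr (-g)"
      using g by (simp add: field_simps)
    ultimately show ?thesis by simp
  qed
  finally show ?case .
qed

lemma powsum:
  fixes g :: real
  assumes g: "g < 1"
  shows "(\<Sum>j\<in>{1..N}. real j powr (-g)) \<le> (1/(1-g) + 1) * real N powr (1 - g)"
proof (cases "g > 0")
  case True
  have "(\<Sum>j\<in>{1..N}. real j powr (-g)) \<le> real N powr (1 - g) / (1 - g)"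
    by (rule powsum_pos) (use True g in auto)
  also have "\<dots> \<le> (1/(1-g) + 1) * real N powr (1 - g)"
    by (simp add: distrib_right)
  finally show ?thesis .
next
  case False
  have "(\<Sum>j\<in>{1..N}. real j powr (-g)) \<le> (\<Sum>j\<in>{1..N}. real N powr (-g))"
    by (rule sum_mono) (use False in \<open>auto intro!: powr_mono2\<close>)
  also have "\<dots> = real N * real N powr (-g)" by simp
  also have "\<dots> = real N powr (1 - g)"
    by (cases "N = 0") (auto simp: powr_diff powr_minus field_simps)
  also have "\<dots> \<le> (1/(1-g) + 1) * real N powr (1 - g)"
    using g by (simp add: field_simps)
  finally show ?thesis .
qed





definition Sf :: "(nat \<Rightarrow> 'w \<Rightarrow> real) \<Rightarrow> (nat \<Rightarrow> 'h::real_normed_vector) \<Rightarrow> nat \<Rightarrow> nat \<Rightarrow> 'w \<Rightarrow> 'h" where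
  "Sf X u m M x = (\<Sum>n\<in>{m<..M}. X n x *\<^sub>R u n)"

definition vf :: "(nat \<Rightarrow> nat \<Rightarrow> real) \<Rightarrow> (nat \<Rightarrow> 'h::real_normed_vector) \<Rightarrow> nat \<Rightarrow> nat \<Rightarrow> nat \<Rightarrow> 'h" where
  "vf a u m M k = (\<Sum>n\<in>{m<..M}. (if k \<le> n then a n k *\<^sub>R u n else 0))"

definition bf :: "(nat \<Rightarrow> nat \<Rightarrow> real) \<Rightarrow> (nat \<Rightarrow> 'h::real_normed_vector) \<Rightarrow> nat \<Rightarrow> nat \<Rightarrow> real" where
  "bf a u k n = (if k \<le> n then \<bar>a n k\<bar> * norm (u n) else 0)"

definition Ff :: "(nat \<Rightarrow> nat \<Rightarrow> real) \<Rightarrow> (nat \<Rightarrow> 'h::real_normed_vector) \<Rightarrow> nat \<Rightarrow> nat \<Rightarrow> real" where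
  "Ff a u m M = (\<Sum>k\<in>{1..M}. (\<Sum>n\<in>{m<..M}. bf a u k n)\<^sup>2)"

lemma Sf_add: "m \<le> l \<Longrightarrow> l \<le> n \<Longrightarrow> Sf X u m l x + Sf X u l n x = Sf X u m n x"
proof -
  assume "m \<le> l" "l \<le> n"
  then have "{m<..n} = {m<..l} \<union> {l<..n}" by auto
  then show ?thesis unfolding Sf_def by (simp add: sum.union_disjoint)
qed

lemma Sf_repr:
  assumes X: "\<And>n x. X n x = (\<Sum>k = 1..n. a n k * Z k x)"
  shows "Sf X u m M x = (\<Sum>k\<in>{1..M}. Z k x *\<^sub>R vf a u m M k)"
proof -
  have "Sf X u m M x = (\<Sum>n\<in>{m<..M}. \<Sum>k\<in>{1..M}. (if k \<le> n then Z k x *\<^sub>R (a n k *\<^sub>R u n) else 0))"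
    unfolding Sf_def
  proof (intro sum.cong refl)
    fix n assume n: "n \<in> {m<..M}"
    have "(\<Sum>k\<in>{1..M}. (if k \<le> n then Z k x *\<^sub>R (a n k *\<^sub>R u n) else 0))
        = (\<Sum>k\<in>{1..M} \<inter> {k. k \<le> n}. Z k x *\<^sub>R (a n k *\<^sub>R u n))"
      by (subst sum.inter_restrict) (auto intro!: sum.cong)
    also have "{1..M} \<inter> {k. k \<le> n} = {1..n}" using n by auto
    finally show "X n x *\<^sub>R u n = (\<Sum>k\<in>{1..M}. (if k \<le> n then Z k x *\<^sub>R (a n k *\<^sub>R u n) else 0))"
      by (simp add: X scaleR_sum_left mult.commute)
  qed
  also have "\<dots> = (\<Sum>k\<in>{1..M}. \<Sum>n\<in>{m<..M}. (if k \<le> n then Z k x *\<^sub>R (a n k *\<^sub>R u n) else 0))"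
    by (rule sum.swap)
  also have "\<dots> = (\<Sum>k\<in>{1..M}. Z k x *\<^sub>R vf a u m M k)"
    unfolding vf_def by (auto simp: scaleR_sum_right intro!: sum.cong)
  finally show ?thesis .
qed

lemma norm_vf: "norm (vf a u m M k) \<le> (\<Sum>n\<in>{m<..M}. bf a u k n)"
  unfolding vf_def bf_def
  by (rule order_trans[OF norm_sum]) (auto intro!: sum_mono)

lemma bf_nonneg: "0 \<le> bf a u k n" unfolding bf_def by auto

lemma Ff_nonneg: "0 \<le> Ff a u m M" unfolding Ff_def by (auto intro!: sum_nonneg)

lemma Ff_sup:
  assumes "m \<le> l" "l \<le> M"
  shows "Ff a u m l + Ff a u l M \<le> Ff a u m M"
proof -
  have "Ff a u m l \<le> (\<Sum>k\<in>{1..M}. (\<Sum>n\<in>{m<..l}. bf a u k n)\<^sup>2)"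
    unfolding Ff_def using assms by (intro sum_mono2) auto
  moreover have "(\<Sum>k\<in>{1..M}. (\<Sum>n\<in>{m<..l}. bf a u k n)\<^sup>2) + Ff a u l M \<le> Ff a u m M"
    unfolding Ff_def sum.distrib[symmetric]
  proof (intro sum_mono)
    fix k
    have un: "{m<..M} = {m<..l} \<union> {l<..M}" using assms by auto
    have e: "(\<Sum>n\<in>{m<..M}. bf a u k n) = (\<Sum>n\<in>{m<..l}. bf a u k n) + (\<Sum>n\<in>{l<..M}. bf a u k n)"
      unfolding un by (simp add: sum.union_disjoint)
    have "0 \<le> (\<Sum>n\<in>{m<..l}. bf a u k n)" "0 \<le> (\<Sum>n\<in>{l<..M}. bf a u k n)"
      by (auto intro!: sum_nonneg bf_nonneg)
    then show "(\<Sum>n\<in>{m<..l}. bf a u k n)\<^sup>2 + (\<Sum>n\<in>{l<..M}. bf a u k n)\<^sup>2 \<le> (\<Sum>n\<in>{m<..M}. bf a u k n)\<^sup>2"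
      unfolding e by (simp add: power2_sum)
  qed
  ultimately show ?thesis by simp
qed

context prob_space
begin

lemma Sf_moment:
  fixes Z :: "nat \<Rightarrow> 'a \<Rightarrow> real" and u :: "nat \<Rightarrow> 'h::real_inner"
  assumes meas: "\<And>k. k \<ge> 1 \<Longrightarrow> Z k \<in> borel_measurable M"
    and indep: "indep_vars (\<lambda>_. borel) Z {1..}"
    and symm: "\<And>k. k \<ge> 1 \<Longrightarrow> distr M borel (Z k) = distr M borel (\<lambda>x. - Z k x)"
    and var_int: "\<And>k. k \<ge> 1 \<Longrightarrow> integrable M (\<lambda>x. (Z k x)\<^sup>2)"
    and var: "\<And>k. k \<ge> 1 \<Longrightarrow> expectation (\<lambda>x. (Z k x)\<^sup>2) = 1"
    and X: "\<And>n x. X n x = (\<Sum>k = 1..n. a n k * Z k x)"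
  shows "integrable M (\<lambda>x. (norm (Sf X u m N x))\<^sup>2)"
    "expectation (\<lambda>x. (norm (Sf X u m N x))\<^sup>2) \<le> Ff a u m N"
proof -
  note rep = Sf_repr[OF X, where u=u and m=m and M=N]
  show "integrable M (\<lambda>x. (norm (Sf X u m N x))\<^sup>2)"
    unfolding rep by (rule sq_sum_integral[OF meas indep symm var_int var]) auto
  have "expectation (\<lambda>x. (norm (Sf X u m N x))\<^sup>2) = (\<Sum>k\<in>{1..N}. (norm (vf a u m N k))\<^sup>2)"
    unfolding rep by (rule sq_sum_integral[OF meas indep symm var_int var]) auto
  also have "\<dots> \<le> Ff a u m N"
    unfolding Ff_def by (intro sum_mono power_mono norm_vf) auto
  finally show "expectation (\<lambda>x. (norm (Sf X u m N x))\<^sup>2) \<le> Ff a u m N" .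
qed

end




lemma shift_sum:
  fixes g :: real and k P :: nat
  assumes k: "1 \<le> k"
  shows "(\<Sum>n\<in>{P<..2*P}. (if k \<le> n then real (n - k + 1) powr (-g) else 0)) \<le> (\<Sum>j\<in>{1..2*P}. real j powr (-g))"
proof -
  have "(\<Sum>n\<in>{P<..2*P}. (if k \<le> n then real (n - k + 1) powr (-g) else 0))
      = (\<Sum>n\<in>{P<..2*P} \<inter> {n. k \<le> n}. real (n - k + 1) powr (-g))"
    by (subst sum.inter_restrict) (auto intro!: sum.cong)
  also have "\<dots> = (\<Sum>j\<in>(\<lambda>n. n - k + 1) ` ({P<..2*P} \<inter> {n. k \<le> n}). real j powr (-g))"
    by (subst sum.reindex) (auto simp: inj_on_def)
  also have "\<dots> \<le> (\<Sum>j\<in>{1..2*P}. real j powr (-g))"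
    using k by (intro sum_mono2) auto
  finally show ?thesis .
qed

lemma Ff_block:
  fixes a :: "nat \<Rightarrow> nat \<Rightarrow> real" and u :: "nat \<Rightarrow> 'h::real_normed_vector"
  assumes C: "C > 0" and g: "g < 1" and D: "D \<ge> 0" and q: "q \<ge> 0"
    and ab: "\<And>n k. 1 \<le> k \<Longrightarrow> k \<le> n \<Longrightarrow> \<bar>a n k\<bar> \<le> C * real (n - k + 1) powr (-g)"
    and ub: "\<And>n. n \<ge> 1 \<Longrightarrow> norm (u n) \<le> D * real n powr (-q)"
    and P: "P \<ge> 1"
  shows "Ff a u P (2*P) \<le> (2 * 2 powr (2 * (1 - g)) * (C * D * (1/(1-g) + 1))\<^sup>2) * real P powr (3 - 2*q - 2*g)"
proof -
  define Kg where "Kg = 1/(1-g) + 1"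
  have Kg: "Kg > 0" using g unfolding Kg_def by (simp add: add_pos_pos)
  have Pp: "real P > 0" using P by simp
  define B where "B = C * D * real P powr (-q) * Kg * real (2*P) powr (1 - g)"
  have B0: "B \<ge> 0" unfolding B_def using C D Kg by auto
  have row: "(\<Sum>n\<in>{P<..2*P}. bf a u k n) \<le> B" if k: "k \<in> {1..2*P}" for k
  proof -
    have "(\<Sum>n\<in>{P<..2*P}. bf a u k n) \<le> (\<Sum>n\<in>{P<..2*P}. (C * D * real P powr (-q)) * (if k \<le> n then real (n - k + 1) powr (-g) else 0))"
    proof (intro sum_mono)
      fix n assume n: "n \<in> {P<..2*P}"
      show "bf a u k n \<le> (C * D * real P powr (-q)) * (if k \<le> n then real (n - k + 1) powr (-g) else 0)"
      proof (cases "k \<le> n")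
        case True
        have a1: "\<bar>a n k\<bar> \<le> C * real (n - k + 1) powr (-g)" using ab[of k n] k True by auto
        have "norm (u n) \<le> D * real n powr (-q)" using ub[of n] n P by auto
        also have "\<dots> \<le> D * real P powr (-q)"
          using n P D q by (intro mult_left_mono powr_mono2') auto
        finally have u1: "norm (u n) \<le> D * real P powr (-q)" .
        have "\<bar>a n k\<bar> * norm (u n) \<le> (C * real (n - k + 1) powr (-g)) * (D * real P powr (-q))"
          using a1 u1 by (intro mult_mono) auto
        then show ?thesis using True unfolding bf_def by (simp add: algebra_simps)
      qed (simp add: bf_def)
    qed
    also have "\<dots> = (C * D * real P powr (-q)) * (\<Sum>n\<in>{P<..2*P}. (if k \<le> n then real (n - k + 1) powr (-g) else 0))"
      by (simp add: sum_distrib_left)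
    also have "\<dots> \<le> (C * D * real P powr (-q)) * (Kg * real (2*P) powr (1 - g))"
    proof (intro mult_left_mono)
      show "(\<Sum>n\<in>{P<..2*P}. (if k \<le> n then real (n - k + 1) powr (-g) else 0)) \<le> Kg * real (2*P) powr (1 - g)"
        using shift_sum[where k=k and P=P and g=g] powsum[OF g, of "2*P"] k unfolding Kg_def by auto
    qed (use C D in auto)
    also have "\<dots> = B" unfolding B_def by simp
    finally show ?thesis .
  qed
  have "Ff a u P (2*P) \<le> (\<Sum>k\<in>{1..2*P}. B\<^sup>2)"
    unfolding Ff_def
    by (intro sum_mono power_mono row) (auto intro!: sum_nonneg bf_nonneg)
  also have "\<dots> = real (2*P) * B\<^sup>2" by simp
  also have "\<dots> = (2 * 2 powr (2 * (1 - g)) * (C * D * Kg)\<^sup>2) * real P powr (3 - 2*q - 2*g)"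
  proof -
    have e1: "real (2*P) powr (1 - g) = 2 powr (1 - g) * real P powr (1 - g)"
      by (simp add: powr_mult)
    have e2: "(x powr y)\<^sup>2 = x powr (2 * y)" if "x > 0" for x y :: real
      using that by (simp add: power2_eq_square powr_add[symmetric])
    have e3: "real P * (real P powr (2 * - q) * real P powr (2 * (1 - g))) = real P powr (3 - 2*q - 2*g)"
      using Pp by (simp add: powr_add[symmetric] powr_mult_base) (simp add: algebra_simps)
    have e4: "real P * (real P powr - (q * 2) * real P powr (2 - g * 2)) = real P powr (3 - (g * 2 + q * 2))"
      using e3 by (simp add: algebra_simps)
    show ?thesis
      unfolding B_def e1 using Pp e4
      by (simp add: power_mult_distrib e2 e3[symmetric] algebra_simps)
  qed
  finally show ?thesis unfolding Kg_def .
qed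





lemma AE_summable_of_int:
  fixes f :: "nat \<Rightarrow> 'a \<Rightarrow> real"
  assumes nn: "\<And>i x. 0 \<le> f i x" and int: "\<And>i. integrable M (f i)"
    and s: "summable (\<lambda>i. integral\<^sup>L M (f i))"
  shows "AE x in M. summable (\<lambda>i. f i x)"
proof -
  have meas: "\<And>i. (\<lambda>x. ennreal (f i x)) \<in> borel_measurable M"
    using int by (auto intro: borel_measurable_integrable)
  have "(\<integral>\<^sup>+ x. (\<Sum>i. ennreal (f i x)) \<partial>M) = (\<Sum>i. \<integral>\<^sup>+ x. ennreal (f i x) \<partial>M)"
    by (rule nn_integral_suminf[OF meas])
  also have "\<dots> = (\<Sum>i. ennreal (integral\<^sup>L M (f i)))"
    using int nn by (subst nn_integral_eq_integral) auto
  also have "\<dots> = ennreal (\<Sum>i. integral\<^sup>L M (f i))"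
    using s nn by (intro suminf_ennreal2) (auto intro!: integral_nonneg_AE)
  finally have "(\<integral>\<^sup>+ x. (\<Sum>i. ennreal (f i x)) \<partial>M) \<noteq> \<infinity>" by simp
  then have "AE x in M. (\<Sum>i. ennreal (f i x)) \<noteq> \<infinity>"
    using meas by (intro nn_integral_noteq_infinite) auto
  then show ?thesis
    by eventually_elim (auto intro!: summable_suminf_not_top nn)
qed

lemma poly_geo_bound:
  fixes s :: real
  assumes "0 \<le> s" "s < 1"
  shows "\<exists>Bd. \<forall>n. (real n + 1) * s^n \<le> Bd"
proof -
  have "(\<lambda>n. real n * s^n) \<longlonglongrightarrow> 0"
    using powser_times_n_limit_0[of s] assms by simp
  moreover have "(\<lambda>n. s^n) \<longlonglongrightarrow> 0"
    using assms by (intro LIMSEQ_power_zero) auto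
  ultimately have "(\<lambda>n. real n * s^n + s^n) \<longlonglongrightarrow> 0 + 0"
    by (intro tendsto_add)
  then have "Bseq (\<lambda>n. real n * s^n + s^n)" by (intro convergent_imp_Bseq convergentI)
  then obtain K where "\<And>n. norm (real n * s^n + s^n) \<le> K" by (auto simp: Bseq_def)
  then have "\<And>n. (real n + 1) * s^n \<le> K"
    by (metis abs_le_D1 real_norm_def distrib_right mult_1)
  then show ?thesis by blast
qed

lemma ex_dyadic:
  fixes N :: nat
  assumes "N \<ge> 1"
  shows "\<exists>i. 2^i \<le> N \<and> N < 2^Suc i"
  using assms
proof (induction N)
  case 0 then show ?case by simp
next
  case (Suc N)
  show ?case
  proof (cases "N = 0")
    case True then show ?thesis by (intro exI[of _ 0]) auto
  next
    case False
    then obtain i where i: "2^i \<le> N" "N < 2^Suc i" using Suc by auto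
    show ?thesis
    proof (cases "Suc N < 2^Suc i")
      case True then show ?thesis using i by (intro exI[of _ i]) auto
    next
      case False
      then have "Suc N = 2^Suc i" using i by simp
      then show ?thesis by (intro exI[of _ "Suc i"]) auto
    qed
  qed
qed





lemma Sf_zero_eq: "Sf X u 0 N x = (\<Sum>n<N. X (Suc n) x *\<^sub>R u (Suc n))"
proof (induction N)
  case 0 then show ?case by (simp add: Sf_def)
next
  case (Suc N)
  have "Sf X u 0 (Suc N) x = Sf X u 0 N x + Sf X u N (Suc N) x"
    by (rule Sf_add[symmetric]) auto
  moreover have "{N<..Suc N} = {Suc N}" by auto
  ultimately show ?case using Suc by (simp add: Sf_def)
qed

lemma pow_block: "real ((2::nat)^i) powr e = (2 powr (e/4)) ^ (4*i)"
proof -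
  have "real ((2::nat)^i) = 2 powr real i" by (simp add: powr_realpow)
  then have "real ((2::nat)^i) powr e = 2 powr (real i * e)" by (simp add: powr_powr)
  also have "\<dots> = (2 powr (e/4)) powr real (4*i)" by (simp add: powr_powr mult.commute)
  also have "\<dots> = (2 powr (e/4)) ^ (4*i)" by (rule powr_realpow) simp
  finally show ?thesis .
qed

context prob_space
begin

lemma core:
  fixes Z :: "nat \<Rightarrow> 'a \<Rightarrow> real" and u :: "nat \<Rightarrow> 'h::{real_inner, complete_space}"
    and a :: "nat \<Rightarrow> nat \<Rightarrow> real" and X :: "nat \<Rightarrow> 'a \<Rightarrow> real"
  assumes meas: "\<And>k. k \<ge> 1 \<Longrightarrow> Z k \<in> borel_measurable M"
    and indep: "indep_vars (\<lambda>_. borel) Z {1..}"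
    and symm: "\<And>k. k \<ge> 1 \<Longrightarrow> distr M borel (Z k) = distr M borel (\<lambda>x. - Z k x)"
    and var_int: "\<And>k. k \<ge> 1 \<Longrightarrow> integrable M (\<lambda>x. (Z k x)\<^sup>2)"
    and var: "\<And>k. k \<ge> 1 \<Longrightarrow> expectation (\<lambda>x. (Z k x)\<^sup>2) = 1"
    and X: "\<And>n x. X n x = (\<Sum>k = 1..n. a n k * Z k x)"
    and C: "C > 0" and g: "g < 1" and D: "D \<ge> 0" and q: "q \<ge> 0"
    and ab: "\<And>n k. 1 \<le> k \<Longrightarrow> k \<le> n \<Longrightarrow> \<bar>a n k\<bar> \<le> C * real (n - k + 1) powr (-g)"
    and ub: "\<And>n. n \<ge> 1 \<Longrightarrow> norm (u n) \<le> D * real n powr (-q)"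
    and e: "3 - 2*q - 2*g < 0"
  shows "AE x in M. summable (\<lambda>n. X (Suc n) x *\<^sub>R u (Suc n))"
proof -
  define K0 where "K0 = 2 * 2 powr (2 * (1 - g)) * (C * D * (1/(1-g) + 1))\<^sup>2"
  have K0: "K0 \<ge> 0" unfolding K0_def by simp
  define s where "s = 2 powr ((3 - 2*q - 2*g)/4)"
  have s: "0 < s" "s < 1" unfolding s_def
    using e powr_less_mono[of "(3 - 2*q - 2*g)/4" 0 2] by auto
  define Dl where "Dl i x = Max ((\<lambda>j. (norm (Sf X u (2^i) (2^i+j) x))\<^sup>2) ` {..2^i})" for i x
  have Dl_ge: "(norm (Sf X u (2^i) (2^i+j) x))\<^sup>2 \<le> Dl i x" if "j \<le> 2^i" for i j x
    unfolding Dl_def using that by (intro Max_ge) auto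
  have Dl_nn: "0 \<le> Dl i x" for i x
    by (rule order_trans[OF zero_le_power2 Dl_ge[of 0 i x]]) simp
  have mor: "integrable M (Dl i) \<and> integral\<^sup>L M (Dl i) \<le> (real i + 1)\<^sup>2 * Ff a u (2^i) (2^i + 2^i)" for i
  proof -
    have "integrable M (\<lambda>x. Max ((\<lambda>j. (norm (Sf X u (2^i) (2^i+j) x))\<^sup>2) ` {..2^i})) \<and>
       integral\<^sup>L M (\<lambda>x. Max ((\<lambda>j. (norm (Sf X u (2^i) (2^i+j) x))\<^sup>2) ` {..2^i})) \<le> (real i + 1)\<^sup>2 * Ff a u (2^i) (2^i + 2^i)"
    proof (rule moricz)
      show "\<And>m l n x. m \<le> l \<Longrightarrow> l \<le> n \<Longrightarrow> Sf X u m l x + Sf X u l n x = Sf X u m n x"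
        by (rule Sf_add)
      show "\<And>m n. m \<le> n \<Longrightarrow> integrable M (\<lambda>x. (norm (Sf X u m n x))\<^sup>2)"
        by (rule Sf_moment[OF meas indep symm var_int var X])
      show "\<And>m n. m \<le> n \<Longrightarrow> integral\<^sup>L M (\<lambda>x. (norm (Sf X u m n x))\<^sup>2) \<le> Ff a u m n"
        by (rule Sf_moment[OF meas indep symm var_int var X])
      show "\<And>m l n. m \<le> l \<Longrightarrow> l \<le> n \<Longrightarrow> Ff a u m l + Ff a u l n \<le> Ff a u m n"
        by (rule Ff_sup)
      show "\<And>m n. m \<le> n \<Longrightarrow> 0 \<le> Ff a u m n" by (rule Ff_nonneg)
    qed
    then show ?thesis unfolding Dl_def by (simp add: fun_eq_iff)
  qed
  have blk: "Ff a u (2^i) (2^i + 2^i) \<le> K0 * s^(4*i)" for i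
  proof -
    have P1: "(1::nat) \<le> 2^i" by simp
    have "Ff a u (2^i) (2*2^i) \<le> K0 * real ((2::nat)^i) powr (3 - 2*q - 2*g)"
      unfolding K0_def by (rule Ff_block[OF C g D q ab ub P1])
    also have "real ((2::nat)^i) powr (3 - 2*q - 2*g) = s^(4*i)"
      unfolding s_def by (rule pow_block)
    finally show ?thesis by (simp only: mult_2)
  qed
  obtain Bd where Bd: "\<And>n. (real n + 1) * s^n \<le> Bd" using poly_geo_bound[of s] s by auto
  define W where "W i x = Dl i x / s^i" for i x
  have W_int: "integrable M (W i)" for i unfolding W_def using mor by simp
  have W_nn: "0 \<le> W i x" for i x unfolding W_def using Dl_nn s by simp
  have W_bnd: "integral\<^sup>L M (W i) \<le> K0 * Bd\<^sup>2 * s^i" for i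
  proof -
    define y where "y = s^i"
    have y: "y > 0" unfolding y_def using s by simp
    have s4: "s^(4*i) = y^4" unfolding y_def by (simp add: power_mult[symmetric] mult.commute)
    have "integral\<^sup>L M (W i) = integral\<^sup>L M (Dl i) / y" unfolding W_def y_def by simp
    also have "\<dots> \<le> ((real i + 1)\<^sup>2 * (K0 * y^4)) / y"
    proof (rule divide_right_mono)
      have "integral\<^sup>L M (Dl i) \<le> (real i + 1)\<^sup>2 * Ff a u (2^i) (2^i + 2^i)" using mor[of i] by blast
      also have "\<dots> \<le> (real i + 1)\<^sup>2 * (K0 * y^4)"
        using blk[of i] unfolding s4 by (rule mult_left_mono) simp
      finally show "integral\<^sup>L M (Dl i) \<le> (real i + 1)\<^sup>2 * (K0 * y^4)" .
    qed (use y in simp)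
    also have "\<dots> = K0 * ((real i + 1) * y)\<^sup>2 * y"
      using y by (simp add: power2_eq_square field_simps eval_nat_numeral)
    also have "\<dots> \<le> K0 * Bd\<^sup>2 * y"
    proof -
      have "0 \<le> (real i + 1) * y" using y by simp
      then have "((real i + 1) * y)\<^sup>2 \<le> Bd\<^sup>2" using Bd[of i] unfolding y_def by (intro power_mono) auto
      then show ?thesis using K0 y by (intro mult_right_mono mult_left_mono) auto
    qed
    finally show ?thesis unfolding y_def .
  qed
  have "summable (\<lambda>i. integral\<^sup>L M (W i))"
  proof (rule summable_comparison_test)
    show "\<exists>N. \<forall>n\<ge>N. norm (integral\<^sup>L M (W n)) \<le> K0 * Bd\<^sup>2 * s^n"
      using W_bnd W_nn by (auto intro!: exI[of _ 0] integral_nonneg_AE)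
    show "summable (\<lambda>n. K0 * Bd\<^sup>2 * s^n)" using s by (intro summable_mult summable_geometric) auto
  qed
  then have "AE x in M. summable (\<lambda>i. W i x)"
    by (intro AE_summable_of_int W_nn W_int)
  then show ?thesis
  proof eventually_elim
    fix x assume sW: "summable (\<lambda>i. W i x)"
    define B where "B = (\<Sum>i. W i x)"
    have WB: "W i x \<le> B" for i
      unfolding B_def using sum_le_suminf[OF sW, of "{i}"] W_nn by auto
    have B0: "B \<ge> 0" using WB[of 0] W_nn[of 0 x] by simp
    define c where "c = sqrt B"
    define t where "t = sqrt s"
    have t: "0 < t" "t < 1" unfolding t_def using s by auto
    have c0: "c \<ge> 0" unfolding c_def using B0 by simp
    define T where "T N = (\<Sum>n<N. X (Suc n) x *\<^sub>R u (Suc n))" for N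
    have Tdiff: "T N - T m = Sf X u m N x" if "m \<le> N" for m N
      using Sf_add[of 0 m N X u x] that unfolding T_def Sf_zero_eq[symmetric] by (simp add: algebra_simps)
    have key: "norm (T N - T (2^i)) \<le> c * t^i" if "2^i \<le> N" "N \<le> 2^Suc i" for N i
    proof (rule power2_le_imp_le)
      define j where "j = N - 2^i"
      have j: "N = 2^i + j" "j \<le> 2^i" using that unfolding j_def by auto
      have "(norm (T N - T (2^i)))\<^sup>2 = (norm (Sf X u (2^i) (2^i+j) x))\<^sup>2"
        using Tdiff[of "2^i" N] j by simp
      also have "\<dots> \<le> Dl i x" by (rule Dl_ge[OF j(2)])
      also have "\<dots> = W i x * s^i" unfolding W_def using s by simp
      also have "\<dots> \<le> B * s^i" using WB[of i] s by (intro mult_right_mono) auto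
      also have "\<dots> = (c * t^i)\<^sup>2"
      proof -
        have c2: "c\<^sup>2 = B" unfolding c_def using B0 by simp
        have t2: "t\<^sup>2 = s" unfolding t_def using s by simp
        have "(c * t^i)\<^sup>2 = c\<^sup>2 * (t^i)\<^sup>2" by (rule power_mult_distrib)
        also have "(t^i)\<^sup>2 = (t\<^sup>2)^i" by (simp only: power_mult[symmetric] mult.commute)
        finally show ?thesis unfolding c2 t2 by simp
      qed
      finally show "(norm (T N - T (2^i)))\<^sup>2 \<le> (c * t^i)\<^sup>2" .
      show "0 \<le> c * t^i" using c0 t by simp
    qed
    have chain: "norm (T (2^i) - T (2^I)) \<le> c * (t^I - t^i) / (1 - t)" if "I \<le> i" for I i
      using that
    proof (induction i rule: dec_induct)
      case base then show ?case by simp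
    next
      case (step i)
      have "norm (T (2^Suc i) - T (2^I)) \<le> norm (T (2^Suc i) - T (2^i)) + norm (T (2^i) - T (2^I))"
        by (rule norm_diff_triangle_le[OF order_refl order_refl])
      also have "\<dots> \<le> c * t^i + c * (t^I - t^i) / (1 - t)"
        using key[of i "2^Suc i"] step.IH by (intro add_mono) auto
      also have "\<dots> = c * (t^I - t^Suc i) / (1 - t)"
        using t by (simp add: field_simps)
      finally show ?case .
    qed
    have tail: "norm (T N - T (2^I)) \<le> c * t^I / (1 - t)" if NI: "2^I \<le> N" for I N
    proof -
      obtain i where i: "2^i \<le> N" "N < 2^Suc i"
      proof -
        have "(1::nat) \<le> 2^I" by simp
        then have "1 \<le> N" using NI by (rule order_trans)
        then show ?thesis using ex_dyadic[of N] that by blast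
      qed
      have "2^I < (2::nat)^Suc i" using le_less_trans[OF NI i(2)] .
      then have "I < Suc i" by (rule power_less_imp_less_exp[rotated]) simp
      then have Ii: "I \<le> i" by simp
      have "norm (T N - T (2^I)) \<le> norm (T N - T (2^i)) + norm (T (2^i) - T (2^I))"
        by (rule norm_diff_triangle_le[OF order_refl order_refl])
      also have "\<dots> \<le> c * t^i + c * (t^I - t^i) / (1 - t)"
        using key[of i N] i chain[OF Ii] by (intro add_mono) auto
      also have "\<dots> = c * (t^I - t^Suc i) / (1 - t)"
        using t by (simp add: field_simps)
      also have "\<dots> \<le> c * t^I / (1 - t)"
        using t c0 by (intro divide_right_mono mult_left_mono) auto
      finally show ?thesis .
    qed
    have "Cauchy T"
    proof (rule CauchyI)
      fix \<epsilon> :: real assume \<epsilon>: "0 < \<epsilon>"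
      have "(\<lambda>I. 2 * c / (1 - t) * t^I) \<longlonglongrightarrow> 2 * c / (1 - t) * 0"
        using t by (intro tendsto_mult tendsto_const LIMSEQ_power_zero) auto
      then have "eventually (\<lambda>I. 2 * c / (1 - t) * t^I < \<epsilon>) sequentially"
        using \<epsilon> by (intro order_tendstoD(2)) auto
      then obtain I where I: "2 * c / (1 - t) * t^I < \<epsilon>" by (auto simp: eventually_sequentially)
      show "\<exists>M. \<forall>m\<ge>M. \<forall>n\<ge>M. norm (T m - T n) < \<epsilon>"
      proof (intro exI allI impI)
        fix m n :: nat assume m: "2^I \<le> m" and n: "2^I \<le> n"
        have "norm (T m - T n) \<le> norm (T m - T (2^I)) + norm (T n - T (2^I))"
        proof -
          have "norm (T m - T n) \<le> norm (T m - T (2^I)) + norm (T (2^I) - T n)"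
            by (rule norm_diff_triangle_le[OF order_refl order_refl])
          then show ?thesis by (simp add: norm_minus_commute)
        qed
        also have "\<dots> \<le> c * t^I / (1 - t) + c * t^I / (1 - t)"
          using tail m n by (intro add_mono) auto
        also have "\<dots> = 2 * c / (1 - t) * t^I" by simp
        finally show "norm (T m - T n) < \<epsilon>" using I by simp
      qed
    qed
    then show "summable (\<lambda>n. X (Suc n) x *\<^sub>R u (Suc n))"
      unfolding summable_iff_convergent T_def[symmetric] by (simp add: Cauchy_convergent_iff)
  qed
qed

end




theorem mainTheorem9:
  fixes M :: "'w measure"
    and Z :: "nat \<Rightarrow> 'w \<Rightarrow> real"
    and a :: "nat \<Rightarrow> nat \<Rightarrow> real"
    and X :: "nat \<Rightarrow> 'w \<Rightarrow> real"
    and u :: "nat \<Rightarrow> 'h :: {real_inner, complete_space}"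
    and C C' \<alpha> \<beta> :: real
  assumes "prob_space M"
    and meas: "\<And>k. k \<ge> 1 \<Longrightarrow> Z k \<in> borel_measurable M"
    and indep: "prob_space.indep_vars M (\<lambda>_. borel) Z {1..}"
    and symm: "\<And>k. k \<ge> 1 \<Longrightarrow> distr M borel (Z k) = distr M borel (\<lambda>x. - Z k x)"
    and var_int: "\<And>k. k \<ge> 1 \<Longrightarrow> integrable M (\<lambda>x. (Z k x)\<^sup>2)"
    and var: "\<And>k. k \<ge> 1 \<Longrightarrow> prob_space.expectation M (\<lambda>x. (Z k x)\<^sup>2) = 1"
    and X_def: "\<And>n x. X n x = (\<Sum>k = 1..n. a n k * Z k x)"
    and C_pos: "C > 0" and alpha: "\<alpha> \<le> 1"
    and a_bound: "\<And>n k. 1 \<le> k \<Longrightarrow> k \<le> n \<Longrightarrow> \<bar>a n k\<bar> \<le> C * (real (n - k + 1)) powr (- \<alpha>)"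
    and C'_pos: "C' > 0" and beta: "\<beta> > 1 - \<alpha>"
    and u_bound: "\<And>n. n \<ge> 1 \<Longrightarrow> (norm (u n))\<^sup>2 \<le> C' * (real n) powr (- (1 + 2 * \<beta>))"
  shows "(AE x in M. summable (\<lambda>n. X (Suc n) x *\<^sub>R u (Suc n)))
    \<and> (\<forall>\<epsilon> :: nat \<Rightarrow> real. (\<forall>n. \<epsilon> n \<in> {-1, 1}) \<longrightarrow>
          (AE x in M. summable (\<lambda>n. (\<epsilon> (Suc n) * X (Suc n) x) *\<^sub>R u (Suc n))))"
proof -
  interpret P: prob_space M by fact
  define g where "g = (1 - \<beta> + \<alpha>) / 2"
  define q where "q = 1/2 + \<beta>"
  define D where "D = sqrt C'"
  have bpos: "\<beta> > 0" using alpha beta by simp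
  have g1: "g < 1" unfolding g_def using alpha bpos by simp
  have ga: "g \<le> \<alpha>" unfolding g_def using beta by simp
  have q0: "q \<ge> 0" unfolding q_def using bpos by simp
  have D0: "D \<ge> 0" unfolding D_def using C'_pos by simp
  have e: "3 - 2*q - 2*g < 0" unfolding q_def g_def using beta by simp
  have ub: "norm (u n) \<le> D * real n powr (-q)" if n: "n \<ge> 1" for n
  proof (rule power2_le_imp_le)
    have "(D * real n powr (-q))\<^sup>2 = D\<^sup>2 * (real n powr (-q))\<^sup>2" by (rule power_mult_distrib)
    also have "D\<^sup>2 = C'" unfolding D_def using C'_pos by simp
    also have "(real n powr (-q))\<^sup>2 = real n powr (- (1 + 2 * \<beta>))"
      using n by (simp add: power2_eq_square powr_add[symmetric] q_def)
    finally show "(norm (u n))\<^sup>2 \<le> (D * real n powr (-q))\<^sup>2" using u_bound[OF n] by simp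
    show "0 \<le> D * real n powr (-q)" using D0 by simp
  qed
  have gen: "AE x in M. summable (\<lambda>n. Y (Suc n) x *\<^sub>R u (Suc n))"
    if Y: "\<And>n x. Y n x = (\<Sum>k = 1..n. b n k * Z k x)"
      and bb: "\<And>n k. \<bar>b n k\<bar> = \<bar>a n k\<bar>" for b :: "nat \<Rightarrow> nat \<Rightarrow> real" and Y
  proof (rule P.core[OF meas indep symm var_int var Y C_pos g1 D0 q0 _ ub e])
    fix n k :: nat assume k: "1 \<le> k" "k \<le> n"
    have "\<bar>b n k\<bar> \<le> C * real (n - k + 1) powr (- \<alpha>)" using a_bound[OF k] bb by simp
    also have "\<dots> \<le> C * real (n - k + 1) powr (- g)"
      using ga C_pos by (intro mult_left_mono powr_mono) auto
    finally show "\<bar>b n k\<bar> \<le> C * real (n - k + 1) powr (- g)" .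
  qed auto
  show ?thesis
  proof (intro conjI allI impI)
    show "AE x in M. summable (\<lambda>n. X (Suc n) x *\<^sub>R u (Suc n))"
      by (rule gen[OF X_def]) simp
  next
    fix \<epsilon> :: "nat \<Rightarrow> real" assume eps: "\<forall>n. \<epsilon> n \<in> {-1, 1}"
    have f1: "\<And>n x. \<epsilon> n * X n x = (\<Sum>k = 1..n. (\<epsilon> n * a n k) * Z k x)"
      by (simp add: X_def sum_distrib_left mult.assoc)
    have f2: "\<And>n k. \<bar>\<epsilon> n * a n k\<bar> = \<bar>a n k\<bar>"
    proof -
      fix n k
      have "\<bar>\<epsilon> n\<bar> = 1" using eps[rule_format, of n] by auto
      then show "\<bar>\<epsilon> n * a n k\<bar> = \<bar>a n k\<bar>" by (simp add: abs_mult)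
    qed
    show "AE x in M. summable (\<lambda>n. (\<epsilon> (Suc n) * X (Suc n) x) *\<^sub>R u (Suc n))"
      using gen[OF f1 f2] by simp
  qed
qed



end
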